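(* Assume the setting and Assumptions A2–A3 below. Run the improved Ader method below with \[ \mathcal{H}=\Big\{\eta_i=\frac{2^{i-1}D}{G}\sqrt{\frac{7}{2T}}\ :\ i=1,\dots,N\Big\},\quad N=\Big\lceil\tfrac12\log_2(1+4T/7)\Big\rceil+1,\quad \alpha=\sqrt{2/(TG^2D^2)}. \] Then for any comparator sequence $\mathbf{u}_1,\dots,\mathbf{u}_T\in\mathcal{X}$, with $P_T=\sum_{t=2}^T\|\mathbf{u}_t-\mathbf{u}_{t-1}\|_2$ and $k=\lfloor\frac12\log_2(1+\frac{4P_T}{7D})\rfloor+1$, \[ \sum_{t=1}^T f_t(\mathbf{x}_t)-\sum_{t=1}^T f_t(\mathbf{u}_t)\le\frac{3G}{4}\sqrt{2T(7D^2+4DP_T)}+\frac{GD\sqrt{2T}}{2}\big[1+2\ln(k+1)\big]=O\big(\sqrt{T(1+P_T)}\big). \]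
   Context: Setting: $\mathcal{X}\subseteq\mathbb{R}^d$ nonempty closed convex; $f_1,\dots,f_T:\mathcal{X}\to\mathbb{R}$ convex differentiable, $f_t$ revealed after $\mathbf{x}_t$ is played. A2: $\max_{\mathbf{x}\in\mathcal{X}}\|\nabla f_t(\mathbf{x})\|_2\le G$ for all $t$. A3: $\mathbf{0}\in\mathcal{X}$ and $\max_{\mathbf{x},\mathbf{x}'\in\mathcal{X}}\|\mathbf{x}-\mathbf{x}'\|_2\le D$. Improved Ader: given $\alpha>0$ and $\mathcal{H}=\{\eta_1\le\dots\le\eta_N\}$, one expert per $\eta$ starting at arbitrary $\mathbf{x}_1^\eta\in\mathcal{X}$; initial weights $w_1^{\eta_i}=\frac{C}{i(i+1)}$, $C=1+1/N$. At round $t$: output $\mathbf{x}_t=\sum_\eta w_t^\eta\mathbf{x}_t^\eta$; query $\nabla f_t(\mathbf{x}_t)$; define the surrogate loss $\ell_t(\mathbf{x})=\langle\nabla f_t(\mathbf{x}_t),\mathbf{x}-\mathbf{x}_t\rangle$; update $w_{t+1}^\eta=\frac{w_t^\eta e^{-\alpha\ell_t(\mathbf{x}_t^\eta)}}{\sum_\mu w_t^\mu e^{-\alpha\ell_t(\mathbf{x}_t^\mu)}}$; each expert updates $\mathbf{x}_{t+1}^\eta=\Pi_{\mathcal{X}}[\mathbf{x}_t^\eta-\eta\nabla f_t(\mathbf{x}_t)]$ (Euclidean projection). *)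

theory Defs
  imports "HOL-Analysis.Analysis"
begin

text \<open>Experts are indexed by i = 1..N (expert i uses step size eta i).
  ader_state gr X alpha eta N x1 k is the pair (expert points, expert weights) at round k+1;
  gr t x is the gradient of f_t at x. Round t uses f_t, i.e. gr t.\<close>

fun ader_state ::
  "(nat \<Rightarrow> 'a::euclidean_space \<Rightarrow> 'a) \<Rightarrow> 'a set \<Rightarrow> real \<Rightarrow> (nat \<Rightarrow> real) \<Rightarrow> nat
   \<Rightarrow> (nat \<Rightarrow> 'a) \<Rightarrow> nat \<Rightarrow> (nat \<Rightarrow> 'a) \<times> (nat \<Rightarrow> real)" where
  "ader_state gr X alpha eta N x1 0 =
     (x1, (\<lambda>i. (1 + 1 / real N) / (real i * (real i + 1))))"
| "ader_state gr X alpha eta N x1 (Suc k) =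
     (let (e, w) = ader_state gr X alpha eta N x1 k;
          x = (\<Sum>i=1..N. w i *\<^sub>R e i);
          g = gr (Suc k) x;
          l = (\<lambda>i. g \<bullet> (e i - x));
          Z = (\<Sum>j=1..N. w j * exp (- alpha * l j))
      in ((\<lambda>i. closest_point X (e i - eta i *\<^sub>R g)),
          (\<lambda>i. w i * exp (- alpha * l i) / Z)))"

definition ader_play ::
  "(nat \<Rightarrow> 'a::euclidean_space \<Rightarrow> 'a) \<Rightarrow> 'a set \<Rightarrow> real \<Rightarrow> (nat \<Rightarrow> real) \<Rightarrow> nat
   \<Rightarrow> (nat \<Rightarrow> 'a) \<Rightarrow> nat \<Rightarrow> 'a" where
  "ader_play gr X alpha eta N x1 t =
     (let (e, w) = ader_state gr X alpha eta N x1 (t - 1) in (\<Sum>i=1..N. w i *\<^sub>R e i))"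

end

theory Submission imports Defs "HOL-Probability.Hoeffding" begin


lemma grad_ineq:
  fixes f :: "'a::euclidean_space \<Rightarrow> real"
  assumes cv: "convex_on X f" and X: "convex X" and x: "x \<in> X" and u: "u \<in> X"
    and d: "(f has_derivative (\<lambda>h. g \<bullet> h)) (at x within X)"
  shows "f x + g \<bullet> (u - x) \<le> f u"
proof (rule ccontr)
  assume neg: "\<not> ?thesis"
  define \<delta> where "\<delta> = g \<bullet> (u - x) - (f u - f x)"
  have dp: "\<delta> > 0" using neg by (simp add: \<delta>_def)
  have un: "u \<noteq> x" using dp by (auto simp: \<delta>_def)
  hence nd: "norm (u - x) > 0" by simp
  define e where "e = \<delta> / (2 * norm (u - x))"
  have ep: "e > 0" using dp nd by (simp add: e_def)
  from d[unfolded has_derivative_within_alt] ep obtain r where r: "r > 0"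
    "\<forall>y\<in>X. norm (y - x) < r \<longrightarrow> norm (f y - f x - g \<bullet> (y - x)) \<le> e * norm (y - x)"
    by blast
  define s where "s = min 1 (r / (2 * norm (u - x)))"
  have s0: "s > 0" "s \<le> 1" using r nd by (auto simp: s_def)
  define y where "y = (1 - s) *\<^sub>R x + s *\<^sub>R u"
  have yX: "y \<in> X" using X x u s0 unfolding y_def by (simp add: convexD)
  have yx: "y - x = s *\<^sub>R (u - x)" by (simp add: y_def algebra_simps)
  have "norm (y - x) = s * norm (u - x)" using yx s0 by simp
  also have "\<dots> \<le> r / (2 * norm (u - x)) * norm (u - x)"
    using nd by (intro mult_right_mono) (auto simp: s_def)
  also have "\<dots> < r" using nd r by simp
  finally have "norm (y - x) < r" .
  with r yX have "norm (f y - f x - g \<bullet> (y - x)) \<le> e * norm (y - x)" by blast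
  hence "f y - f x - s * (g \<bullet> (u - x)) \<ge> - (e * (s * norm (u - x)))"
    using yx s0 by (auto simp: abs_le_iff)
  moreover have "e * (s * norm (u - x)) = s * \<delta> / 2" using nd by (simp add: e_def)
  moreover have "f y \<le> (1 - s) * f x + s * f u"
    using cv x u s0 unfolding y_def by (intro convex_onD) auto
  ultimately have "s * (g \<bullet> (u - x)) - s * \<delta> / 2 \<le> s * (f u - f x)"
    by (simp add: algebra_simps)
  moreover have "s * (f u - f x) = s * (g \<bullet> (u - x)) - s * \<delta>" by (simp add: \<delta>_def right_diff_distrib)
  ultimately have "s * \<delta> / 2 \<le> 0" by linarith
  thus False using mult_pos_pos[OF s0(1) dp] by linarith
qed

lemma round_bound:
  fixes w l :: "nat \<Rightarrow> real"
  assumes I: "finite I" and w0: "\<forall>i\<in>I. w i \<ge> 0" and w1: "sum w I = 1"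
    and wl: "(\<Sum>i\<in>I. w i * l i) = 0" and lc: "\<forall>i\<in>I. \<bar>l i\<bar> \<le> c" and c: "c > 0" and a: "a \<ge> 0"
  shows "(\<Sum>i\<in>I. w i * exp (- a * l i)) \<le> exp (a\<^sup>2 * c\<^sup>2 / 2)"
proof -
  have pt: "exp (- a * l i) \<le> (1 - (c + l i) / (2 * c)) * exp (a * c) + ((c + l i) / (2 * c)) * exp (a * (- c))"
    if i: "i \<in> I" for i
  proof -
    define t where "t = (c + l i) / (2 * c)"
    have t: "0 \<le> t" "t \<le> 1" using lc i c by (auto simp: t_def field_simps abs_le_iff)
    have "(1 - t) * c + t * (- c) = - l i" using c by (simp add: t_def field_simps)
    hence "exp (a * (- l i)) = exp (a * ((1 - t) * c + t * (- c)))" by simp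
    also have "\<dots> \<le> (1 - t) * exp (a * c) + t * exp (a * (- c))"
      using convex_onD[OF convex_on_exp[OF a], of t c "-c"] t by simp
    finally show ?thesis by (simp add: t_def)
  qed
  have "(\<Sum>i\<in>I. w i * exp (- a * l i)) \<le>
      (\<Sum>i\<in>I. w i * ((1 - (c + l i) / (2 * c)) * exp (a * c) + ((c + l i) / (2 * c)) * exp (a * (- c))))"
    using pt w0 by (intro sum_mono mult_left_mono) auto
  also have "\<dots> = (\<Sum>i\<in>I. w i * ((exp (a * c) + exp (- (a * c))) / 2)
          + (w i * l i) * ((exp (- (a * c)) - exp (a * c)) / (2 * c)))"
  proof (rule sum.cong[OF refl])
    fix i
    show "w i * ((1 - (c + l i) / (2 * c)) * exp (a * c) + ((c + l i) / (2 * c)) * exp (a * (- c))) =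
      w i * ((exp (a * c) + exp (- (a * c))) / 2) + (w i * l i) * ((exp (- (a * c)) - exp (a * c)) / (2 * c))"
      using c by (simp add: field_simps)
  qed
  also have "\<dots> = (\<Sum>i\<in>I. w i) * ((exp (a * c) + exp (- (a * c))) / 2)
       + (\<Sum>i\<in>I. w i * l i) * ((exp (- (a * c)) - exp (a * c)) / (2 * c))"
    by (simp only: sum.distrib sum_distrib_right)
  also have "\<dots> = (exp (a * c) + exp (- (a * c))) / 2"
    using wl w1 by simp
  also have "\<dots> \<le> exp (a\<^sup>2 * c\<^sup>2 / 2)"
  proof -
    have h: "- (2*a*c) * (1/2) + ln (1 + (1/2) * (exp (2*a*c) - 1)) \<le> (2*a*c)\<^sup>2 / 8"
      using Hoeffdings_lemma_aux[of "2*a*c" "1/2"] a c by simp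
    have pos: "1 + (1/2) * (exp (2*a*c) - 1) > 0" by (simp add: right_diff_distrib add_pos_pos)
    have m: "exp (- (a*c)) * exp (2*a*c) = exp (a*c)"
      by (simp only: exp_add[symmetric]) simp
    have eq: "(exp (a * c) + exp (- (a * c))) / 2 = exp (- (a*c)) * (1 + (1/2) * (exp (2*a*c) - 1))"
      using m by (simp add: algebra_simps)
    have "(exp (a * c) + exp (- (a * c))) / 2 = exp (- (a*c) + ln (1 + (1/2) * (exp (2*a*c) - 1)))"
      using pos by (simp only: eq exp_add exp_ln)
    also have "\<dots> \<le> exp (a\<^sup>2 * c\<^sup>2 / 2)"
      using h by (simp add: power2_eq_square algebra_simps)
    finally show ?thesis .
  qed
  finally show ?thesis .
qed

lemma sq_diff:
  fixes a b c :: "'a::euclidean_space"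
  assumes "a \<in> X" "b \<in> X" "c \<in> X" and D: "\<forall>x\<in>X. \<forall>x'\<in>X. norm (x - x') \<le> D"
  shows "(norm (a - b))\<^sup>2 - (norm (a - c))\<^sup>2 \<le> 2 * D * norm (b - c)"
proof -
  define p q where "p = norm (a - b)" and "q = norm (a - c)"
  have pq: "\<bar>p - q\<bar> \<le> norm (b - c)" unfolding p_def q_def
    using norm_triangle_ineq3[of "a - b" "a - c"] by (simp add: norm_minus_commute)
  have "p \<le> D" "q \<le> D" "p \<ge> 0" "q \<ge> 0" using assms by (auto simp: p_def q_def)
  have "p\<^sup>2 - q\<^sup>2 = (p - q) * (p + q)" by (simp add: power2_eq_square algebra_simps)
  also have "\<dots> \<le> \<bar>p - q\<bar> * (p + q)" using \<open>p \<ge> 0\<close> \<open>q \<ge> 0\<close> by (intro mult_right_mono) auto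
  also have "\<dots> \<le> norm (b - c) * (2 * D)" using pq \<open>p \<le> D\<close> \<open>q \<le> D\<close> \<open>p \<ge> 0\<close> \<open>q \<ge> 0\<close>
    by (intro mult_mono) auto
  finally show ?thesis by (simp add: p_def q_def algebra_simps)
qed



lemma ogd_step:
  fixes y v g :: "'a::euclidean_space"
  assumes X: "X \<noteq> {}" "closed X" "convex X" and v: "v \<in> X" and eta: "\<eta> > 0"
  shows "g \<bullet> (y - v) \<le> ((norm (y - v))\<^sup>2 - (norm (closest_point X (y - \<eta> *\<^sub>R g) - v))\<^sup>2) / (2 * \<eta>)
           + \<eta> * (norm g)\<^sup>2 / 2"
proof -
  have "norm (closest_point X (y - \<eta> *\<^sub>R g) - v) \<le> norm ((y - \<eta> *\<^sub>R g) - v)"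
    using closest_point_lipschitz[OF X(3,2,1), of "y - \<eta> *\<^sub>R g" v] closest_point_self[OF v]
    by (simp add: dist_norm)
  hence "(norm (closest_point X (y - \<eta> *\<^sub>R g) - v))\<^sup>2 \<le> (norm ((y - \<eta> *\<^sub>R g) - v))\<^sup>2"
    by (intro power_mono) auto
  also have "(norm ((y - \<eta> *\<^sub>R g) - v))\<^sup>2 = (norm (y - v))\<^sup>2 - 2 * \<eta> * (g \<bullet> (y - v)) + \<eta>\<^sup>2 * (norm g)\<^sup>2"
  proof -
    have e: "(y - \<eta> *\<^sub>R g) - v = (y - v) - \<eta> *\<^sub>R g" by (simp add: algebra_simps)
    have "(norm (a - \<eta> *\<^sub>R g))\<^sup>2 = (norm a)\<^sup>2 - 2 * \<eta> * (g \<bullet> a) + \<eta>\<^sup>2 * (norm g)\<^sup>2" for a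
      unfolding power2_norm_eq_inner by (simp add: inner_diff_left inner_diff_right inner_commute algebra_simps power2_eq_square)
    from this[of "y - v"] show ?thesis by (simp only: e)
  qed
  finally have "2 * \<eta> * (g \<bullet> (y - v)) \<le> (norm (y - v))\<^sup>2 - (norm (closest_point X (y - \<eta> *\<^sub>R g) - v))\<^sup>2 + \<eta>\<^sup>2 * (norm g)\<^sup>2"
    by linarith
  thus ?thesis using eta by (simp add: field_simps power2_eq_square)
qed

lemma ogd:
  fixes y v g :: "nat \<Rightarrow> 'a::euclidean_space"
  assumes X: "X \<noteq> {}" "closed X" "convex X" and eta: "\<eta> > 0"
    and step: "\<forall>k\<le>n. y (Suc k) = closest_point X (y k - \<eta> *\<^sub>R g k)"
    and yX: "\<forall>k\<le>Suc n. y k \<in> X" and vX: "\<forall>k\<le>n. v k \<in> X"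
    and gG: "\<forall>k\<le>n. norm (g k) \<le> G"
    and diam: "\<forall>x\<in>X. \<forall>x'\<in>X. norm (x - x') \<le> D"
  shows "(\<Sum>k<Suc n. g k \<bullet> (y k - v k)) \<le>
     (D\<^sup>2 + 2 * D * (\<Sum>k<n. norm (v (Suc k) - v k)) - (norm (y (Suc n) - v n))\<^sup>2) / (2 * \<eta>)
     + \<eta> * real (Suc n) * G\<^sup>2 / 2"
  using step yX vX gG
proof (induction n)
  case 0
  have "g 0 \<bullet> (y 0 - v 0) \<le> ((norm (y 0 - v 0))\<^sup>2 - (norm (y 1 - v 0))\<^sup>2) / (2 * \<eta>) + \<eta> * (norm (g 0))\<^sup>2 / 2"
    using ogd_step[OF X _ eta, where v="v 0" and y="y 0" and g="g 0"] 0 by simp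
  moreover have "(norm (y 0 - v 0))\<^sup>2 \<le> D\<^sup>2" using diam 0 by (intro power_mono) auto
  moreover have "(norm (g 0))\<^sup>2 \<le> G\<^sup>2" using 0 by (intro power_mono) auto
  ultimately have "g 0 \<bullet> (y 0 - v 0) \<le> (D\<^sup>2 - (norm (y 1 - v 0))\<^sup>2) / (2 * \<eta>) + \<eta> * G\<^sup>2 / 2"
    using eta by (smt (verit) divide_right_mono mult_left_mono)
  thus ?case by simp
next
  case (Suc n)
  define Q where "Q = (\<Sum>k<n. norm (v (Suc k) - v k))"
  have IH: "(\<Sum>k<Suc n. g k \<bullet> (y k - v k)) \<le>
     (D\<^sup>2 + 2 * D * Q - (norm (y (Suc n) - v n))\<^sup>2) / (2 * \<eta>) + \<eta> * real (Suc n) * G\<^sup>2 / 2"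
    using Suc by (simp add: Q_def)
  have st: "g (Suc n) \<bullet> (y (Suc n) - v (Suc n)) \<le> ((norm (y (Suc n) - v (Suc n)))\<^sup>2 - (norm (y (Suc (Suc n)) - v (Suc n)))\<^sup>2) / (2 * \<eta>)
           + \<eta> * (norm (g (Suc n)))\<^sup>2 / 2"
    using ogd_step[OF X _ eta, where v="v (Suc n)" and y="y (Suc n)" and g="g (Suc n)"] Suc.prems by simp
  have gs: "(norm (g (Suc n)))\<^sup>2 \<le> G\<^sup>2" using Suc.prems by (intro power_mono) auto
  have sq: "(norm (y (Suc n) - v (Suc n)))\<^sup>2 - (norm (y (Suc n) - v n))\<^sup>2 \<le> 2 * D * norm (v (Suc n) - v n)"
  proof -
    have a: "y (Suc n) \<in> X" "v (Suc n) \<in> X" "v n \<in> X"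
      using Suc.prems(2)[rule_format, of "Suc n"] Suc.prems(3)[rule_format, of "Suc n"]
        Suc.prems(3)[rule_format, of n] by auto
    show ?thesis using sq_diff[OF a diam] .
  qed
  have "(\<Sum>k<Suc (Suc n). g k \<bullet> (y k - v k)) = (\<Sum>k<Suc n. g k \<bullet> (y k - v k)) + g (Suc n) \<bullet> (y (Suc n) - v (Suc n))"
    by simp
  also have "\<dots> \<le> (D\<^sup>2 + 2 * D * Q - (norm (y (Suc n) - v n))\<^sup>2) / (2 * \<eta>) + \<eta> * real (Suc n) * G\<^sup>2 / 2
     + (((norm (y (Suc n) - v (Suc n)))\<^sup>2 - (norm (y (Suc (Suc n)) - v (Suc n)))\<^sup>2) / (2 * \<eta>) + \<eta> * G\<^sup>2 / 2)"
    using IH st gs eta by (smt (verit) mult_left_mono divide_right_mono)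
  also have "\<dots> = (D\<^sup>2 + 2 * D * Q + ((norm (y (Suc n) - v (Suc n)))\<^sup>2 - (norm (y (Suc n) - v n))\<^sup>2)
        - (norm (y (Suc (Suc n)) - v (Suc n)))\<^sup>2) / (2 * \<eta>) + \<eta> * real (Suc (Suc n)) * G\<^sup>2 / 2"
    using eta by (simp add: field_simps)
  also have "\<dots> \<le> (D\<^sup>2 + 2 * D * Q + 2 * D * norm (v (Suc n) - v n)
        - (norm (y (Suc (Suc n)) - v (Suc n)))\<^sup>2) / (2 * \<eta>) + \<eta> * real (Suc (Suc n)) * G\<^sup>2 / 2"
    using sq eta by (intro add_right_mono divide_right_mono) auto
  finally show ?case by (simp add: Q_def algebra_simps)
qed

lemma sum_shift1: "(\<Sum>t=1..n. F t) = (\<Sum>k<n. F (Suc k))"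
  by (induction n) auto

lemma sum_shift2: "(\<Sum>t=2..Suc n. F t) = (\<Sum>k<n. F (Suc (Suc k)))"
  by (induction n) auto

lemma harm_sum: "(\<Sum>i=1..n. 1 / (real i * (real i + 1))) = real n / (real n + 1)"
proof (induction n)
  case (Suc n)
  have "(\<Sum>i=1..Suc n. 1 / (real i * (real i + 1))) = real n / (real n + 1) + 1 / (real (Suc n) * (real (Suc n) + 1))"
    using Suc.IH by simp
  also have "\<dots> = real (Suc n) / (real (Suc n) + 1)"
  proof -
    have t: "m/(m+1) + 1/((m+1)*(m+1+1)) = (m+1)/(m+1+1)" if m: "m \<ge> 0" for m :: real
    proof -
      have a: "m + 1 \<noteq> 0" "m + 1 + 1 \<noteq> 0" using m by linarith+
      show ?thesis using a by (simp add: divide_simps) (simp add: algebra_simps power2_eq_square)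
    qed
    show ?thesis using t[of "real n"] by (simp add: algebra_simps)
  qed
  finally show ?case .
qed simp



theorem theorem4:
  fixes X :: "'a::euclidean_space set"
    and f :: "nat \<Rightarrow> 'a \<Rightarrow> real"
    and gr :: "nat \<Rightarrow> 'a \<Rightarrow> 'a"
    and G D :: real and T :: nat
    and x1 :: "nat \<Rightarrow> 'a" and u :: "nat \<Rightarrow> 'a"
  assumes X: "X \<noteq> {}" "closed X" "convex X"
    and T: "T \<ge> 1"
    and GD: "G > 0" "D > 0"
    and cvx: "\<forall>t\<in>{1..T}. convex_on X (f t)"
    and grad: "\<forall>t\<in>{1..T}. \<forall>x\<in>X. (f t has_derivative (\<lambda>h. gr t x \<bullet> h)) (at x within X)"
    and A2: "\<forall>t\<in>{1..T}. \<forall>x\<in>X. norm (gr t x) \<le> G"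
    and A3: "0 \<in> X" "\<forall>x\<in>X. \<forall>x'\<in>X. norm (x - x') \<le> D"
    and N_def: "N = nat \<lceil>1/2 * log 2 (1 + 4 * real T / 7)\<rceil> + 1"
    and eta_def: "eta = (\<lambda>i::nat. 2 ^ (i - 1) * D / G * sqrt (7 / (2 * real T)))"
    and alpha_def: "alpha = sqrt (2 / (real T * G\<^sup>2 * D\<^sup>2))"
    and x1: "\<forall>i\<in>{1..N}. x1 i \<in> X"
    and u: "\<forall>t\<in>{1..T}. u t \<in> X"
    and P_def: "P = (\<Sum>t=2..T. norm (u t - u (t - 1)))"
    and k_def: "k = nat \<lfloor>1/2 * log 2 (1 + 4 * P / (7 * D))\<rfloor> + 1"
  shows "(\<Sum>t=1..T. f t (ader_play gr X alpha eta N x1 t)) - (\<Sum>t=1..T. f t (u t))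
     \<le> 3 * G / 4 * sqrt (2 * real T * (7 * D\<^sup>2 + 4 * D * P))
       + G * D * sqrt (2 * real T) / 2 * (1 + 2 * ln (real k + 1))"
proof -
  define st where "st t = ader_state gr X alpha eta N x1 t" for t
  define e where "e t = fst (st t)" for t
  define w where "w t = snd (st t)" for t
  define xx where "xx t = (\<Sum>i=1..N. w t i *\<^sub>R e t i)" for t
  define g where "g t = gr (Suc t) (xx t)" for t
  define l where "l t i = g t \<bullet> (e t i - xx t)" for t i
  define Z where "Z t = (\<Sum>j=1..N. w t j * exp (- alpha * l t j))" for t
  have stk: "ader_state gr X alpha eta N x1 t = (e t, w t)" for t
    by (simp add: e_def w_def st_def)
  have e0: "e 0 = x1" and w0: "w 0 = (\<lambda>i. (1 + 1 / real N) / (real i * (real i + 1)))"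
    by (simp_all add: e_def w_def st_def)
  have sS: "ader_state gr X alpha eta N x1 (Suc t) = ((\<lambda>i. closest_point X (e t i - eta i *\<^sub>R g t)),
       (\<lambda>i. w t i * exp (- alpha * l t i) / Z t))" for t
    using stk[of t] by (simp add: Let_def xx_def g_def l_def Z_def)
  have eS: "e (Suc t) i = closest_point X (e t i - eta i *\<^sub>R g t)" for t i
    unfolding e_def st_def sS by simp
  have wS: "w (Suc t) i = w t i * exp (- alpha * l t i) / Z t" for t i
    unfolding w_def st_def sS by simp
  have play: "ader_play gr X alpha eta N x1 (Suc t) = xx t" for t
    by (simp add: ader_play_def stk xx_def)
  have N1: "N \<ge> 1" using N_def by simp
  have eX: "\<forall>i\<in>{1..N}. e t i \<in> X" for t
  proof (induction t)
    case 0 then show ?case using x1 e0 by simp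
  next
    case (Suc t) then show ?case using eS closest_point_in_set[OF X(2,1)] by simp
  qed
  have wpos: "(\<forall>i\<in>{1..N}. w t i > 0) \<and> sum (w t) {1..N} = 1" for t
  proof (induction t)
    case 0
    have "sum (w 0) {1..N} = (1 + 1 / real N) * (\<Sum>i=1..N. 1 / (real i * (real i + 1)))"
      by (simp add: w0 sum_distrib_left)
    also have "\<dots> = 1"
    proof -
      have Np: "real N > 0" using N1 by simp
      hence "real N + real N * real N \<noteq> 0" using mult_pos_pos[OF Np Np] by linarith
      thus ?thesis unfolding harm_sum using Np by (simp add: field_simps)
    qed
    finally show ?case by (simp add: w0 add_pos_pos)
  next
    case (Suc t)
    have Zp: "Z t > 0" unfolding Z_def using Suc N1
      by (intro sum_pos) auto
    have "sum (w (Suc t)) {1..N} = (\<Sum>i=1..N. w t i * exp (- alpha * l t i)) / Z t"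
    proof -
      have wS': "w (Suc t) = (\<lambda>i. w t i * exp (- alpha * l t i) / Z t)" by (rule ext) (rule wS)
      show ?thesis by (simp only: wS' sum_divide_distrib)
    qed
    also have "\<dots> = Z t / Z t" by (simp only: Z_def)
    finally have "sum (w (Suc t)) {1..N} = Z t / Z t" .
    then show ?case using Zp Suc by (simp add: wS)
  qed
  have Zp: "Z t > 0" for t unfolding Z_def using wpos[of t] N1 by (intro sum_pos) auto
  have xxX: "xx t \<in> X" for t
    unfolding xx_def using wpos[of t] eX[of t] X(3)
    by (intro convex_sum) (auto intro!: less_imp_le)
  have gG: "norm (g t) \<le> G" if "t < T" for t
    using A2 xxX[of t] that by (simp add: g_def)
  have lb: "\<bar>l t i\<bar> \<le> G * D" if "t < T" "i \<in> {1..N}" for t i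
  proof -
    have "\<bar>l t i\<bar> \<le> norm (g t) * norm (e t i - xx t)"
      unfolding l_def by (rule Cauchy_Schwarz_ineq2)
    also have "\<dots> \<le> G * D" using gG[OF that(1)] A3(2) eX[of t] xxX[of t] that(2) GD
      by (intro mult_mono) auto
    finally show ?thesis .
  qed
  have wl0: "(\<Sum>i=1..N. w t i * l t i) = 0" for t
  proof -
    have "(\<Sum>i=1..N. w t i * l t i) = g t \<bullet> xx t - (\<Sum>i=1..N. w t i) * (g t \<bullet> xx t)"
      by (simp add: l_def xx_def inner_diff_right inner_sum_right right_diff_distrib sum_subtractf sum_distrib_right)
    thus ?thesis using wpos[of t] by simp
  qed
  have alpha_pos: "alpha > 0" using GD T by (simp add: alpha_def)
  have a2: "alpha^2 = 2 / (real T * G^2 * D^2)" using GD T by (simp add: alpha_def)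
  have Ta: "real T * (alpha^2 * (G*D)^2 / 2) = 1" using GD T by (simp add: a2 field_simps power_mult_distrib)
  have Zb: "Z t \<le> exp (alpha^2 * (G*D)^2 / 2)" if "t < T" for t
  proof -
    have "(\<Sum>i\<in>{1..N}. w t i * exp (- alpha * l t i)) \<le> exp (alpha^2 * (G*D)^2 / 2)"
      by (rule round_bound) (use wpos[of t] wl0[of t] lb[OF that] GD alpha_pos in \<open>auto intro!: less_imp_le\<close>)
    thus ?thesis by (simp add: Z_def)
  qed
  have wprod: "w n i = w 0 i * exp (- alpha * (\<Sum>t<n. l t i)) / (\<Prod>t<n. Z t)" for n i
  proof (induction n)
    case (Suc n)
    have ee: "exp (- alpha * (\<Sum>t<n. l t i)) * exp (- alpha * l n i) = exp (- alpha * (\<Sum>t<Suc n. l t i))"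
      by (simp add: exp_add[symmetric] distrib_left)
    have "w (Suc n) i = (w 0 i * exp (- alpha * (\<Sum>t<n. l t i)) / (\<Prod>t<n. Z t)) * exp (- alpha * l n i) / Z n"
      using Suc.IH by (simp add: wS)
    also have "\<dots> = w 0 i * (exp (- alpha * (\<Sum>t<n. l t i)) * exp (- alpha * l n i)) / ((\<Prod>t<n. Z t) * Z n)"
      by simp
    also have "\<dots> = w 0 i * exp (- alpha * (\<Sum>t<Suc n. l t i)) / (\<Prod>t<Suc n. Z t)"
      by (simp only: ee prod.lessThan_Suc)
    finally show ?case .
  qed simp

  define rr where "rr = 1 + 4 * P / (7 * D)"
  define m where "m = \<lfloor>1/2 * log 2 rr\<rfloor>"
  have P0: "P \<ge> 0" by (simp add: P_def sum_nonneg)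
  have PT: "P \<le> real T * D"
  proof -
    have "P \<le> real (card {2..T}) * D" unfolding P_def
    proof (rule sum_bounded_above)
      fix t assume t: "t \<in> {2..T}"
      hence "t \<in> {1..T}" "t - 1 \<in> {1..T}" by auto
      hence "u t \<in> X" "u (t - 1) \<in> X" using u by blast+
      thus "norm (u t - u (t - 1)) \<le> D" using A3(2) by blast
    qed
    also have "\<dots> \<le> real T * D" using GD by (intro mult_right_mono) auto
    finally show ?thesis .
  qed
  have rr1: "rr \<ge> 1" using P0 GD by (simp add: rr_def)
  have rrT: "rr \<le> 1 + 4 * real T / 7" using PT GD by (simp add: rr_def field_simps)
  have lg0: "log 2 rr \<ge> 0" using rr1 by simp
  have m0: "m \<ge> 0" using lg0 by (simp add: m_def)
  have mle: "real_of_int m \<le> 1/2 * log 2 rr" and mlt: "1/2 * log 2 rr < real_of_int m + 1"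
    using floor_correct[of "1/2 * log 2 rr"] by (simp_all add: m_def)
  have kdef: "k = nat m + 1" by (simp add: k_def m_def rr_def)
  have kN: "k \<le> N"
  proof -
    have "1/2 * log 2 rr \<le> 1/2 * log 2 (1 + 4 * real T / 7)" using rr1 rrT by simp
    hence "real_of_int m \<le> real_of_int \<lceil>1/2 * log 2 (1 + 4 * real T / 7)\<rceil>"
      using mle le_of_int_ceiling[of "1/2 * log 2 (1 + 4 * real T / 7)"] by linarith
    hence "m \<le> \<lceil>1/2 * log 2 (1 + 4 * real T / 7)\<rceil>" by simp
    hence "nat m \<le> nat \<lceil>1/2 * log 2 (1 + 4 * real T / 7)\<rceil>" by (rule nat_mono)
    thus ?thesis using N_def kdef by simp
  qed
  have kI: "k \<in> {1..N}" using kN kdef by simp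
  define q where "q = sqrt rr"
  define s where "s = (2::real) ^ (nat m)"
  have q_eq: "q = 2 powr (1/2 * log 2 rr)"
  proof -
    have "2 powr (1/2 * log 2 rr) = (2 powr log 2 rr) powr (1/2)" by (simp add: powr_powr mult.commute)
    also have "\<dots> = rr powr (1/2)" using rr1 by simp
    also have "\<dots> = sqrt rr" using rr1 by (simp add: powr_half_sqrt)
    finally show ?thesis by (simp add: q_def)
  qed
  have s_eq: "s = 2 powr (real_of_int m)"
  proof -
    have "2 powr (real_of_int m) = 2 powr (real (nat m))" using m0 by simp
    also have "\<dots> = s" by (simp add: s_def powr_realpow)
    finally show ?thesis by simp
  qed
  have sq1: "s \<le> q" using powr_mono[OF mle, of 2] by (simp add: q_eq s_eq)
  have sq2: "q \<le> 2 * s"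
  proof -
    have "q \<le> 2 powr (real_of_int m + 1)" using powr_mono[OF less_imp_le[OF mlt], of 2] by (simp add: q_eq)
    also have "\<dots> = 2 * s" by (simp add: s_eq powr_add)
    finally show ?thesis .
  qed
  have s_pos: "s > 0" by (simp add: s_def)
  define b where "b = D / G * sqrt (7 / (2 * real T))"
  have etak: "eta k = s * b" by (simp add: eta_def kdef s_def b_def)
  have b_pos: "b > 0" using GD T by (simp add: b_def)
  have eta_pos: "eta k > 0" using etak s_pos b_pos by simp
  have b2: "b^2 * (2 * real T * G^2) = 7 * D^2"
    using GD T by (simp add: b_def power_mult_distrib power_divide field_simps)
  have qq: "q^2 = rr" proof - have "0 \<le> rr" using rr1 by linarith thus ?thesis by (simp add: q_def) qed
  have q_pos: "q \<ge> 0" using rr1 by (simp add: q_def)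
  define A where "A = 7 * D^2 + 4 * D * P"
  have A_eq: "A = 2 * real T * G^2 * b^2 * q^2"
  proof -
    have "A = 7 * D^2 * rr" using GD by (simp add: A_def rr_def field_simps power2_eq_square)
    also have "\<dots> = b^2 * (2 * real T * G^2) * q^2" by (simp add: b2 qq)
    finally show ?thesis by (simp add: ac_simps)
  qed
  have sqA: "sqrt (2 * real T * A) = 2 * real T * G * b * q"
  proof (rule real_sqrt_unique)
    show "(2 * real T * G * b * q)^2 = 2 * real T * A"
      by (simp add: A_eq power_mult_distrib power2_eq_square)
    show "0 \<le> 2 * real T * G * b * q" using GD b_pos q_pos by simp
  qed
  have expert_num: "(D^2 + 2*D*P) / (2 * eta k) + eta k * real T * G^2 / 2 \<le> 3 * G / 4 * sqrt (2 * real T * (7 * D^2 + 4 * D * P))"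
  proof -
    have "(D^2 + 2*D*P) / (2 * eta k) = (2*D^2 + 4*D*P) / (4 * eta k)" using eta_pos by (simp add: field_simps)
    also have "\<dots> \<le> A / (4 * eta k)" using eta_pos GD by (intro divide_right_mono) (auto simp: A_def)
    finally have 1: "(D^2 + 2*D*P) / (2 * eta k) \<le> A / (4 * eta k)" .
    have 2: "A / (4 * eta k) + eta k * real T * G^2 / 2 = real T * G^2 * b * (q^2 + s^2) / (2 * s)"
      using s_pos b_pos by (simp add: A_eq etak field_simps power2_eq_square)
    have 3: "3 * G / 4 * sqrt (2 * real T * A) = real T * G^2 * b * (3 * q * s) / (2 * s)"
      using s_pos unfolding sqA by (simp add: field_simps power2_eq_square)
    have key: "q^2 + s^2 \<le> 3 * q * s"
    proof -
      have "(q - s) * (q - 2 * s) \<le> 0" using sq1 sq2 by (intro mult_nonneg_nonpos) auto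
      moreover have "(q - s) * (q - 2 * s) = q^2 + s^2 - 3 * q * s + s^2" by (simp add: power2_eq_square algebra_simps)
      moreover have "0 \<le> s^2" by simp
      ultimately show ?thesis by linarith
    qed
    have "real T * G^2 * b * (q^2 + s^2) / (2 * s) \<le> real T * G^2 * b * (3 * q * s) / (2 * s)"
      using key s_pos b_pos GD by (intro divide_right_mono mult_left_mono) auto
    thus ?thesis using 1 2 3 by (simp add: A_def)
  qed

  define L where "L = (\<Sum>t<T. l t k)"
  have w0k: "w 0 k > 0" using wpos[of 0] kI by blast
  have wTk: "w T k \<le> 1"
  proof -
    have "w T k \<le> sum (w T) {1..N}"
      by (rule member_le_sum) (use kI wpos[of T] in \<open>auto intro: less_imp_le\<close>)
    thus ?thesis using wpos[of T] by simp
  qed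
  have Pp: "(\<Prod>t<T. Z t) > 0" using Zp by (simp add: prod_pos)
  have m1: "w 0 k * exp (- alpha * L) \<le> (\<Prod>t<T. Z t)"
    using wTk wprod[of T k] Pp by (simp add: L_def divide_le_eq)
  have "(\<Prod>t<T. Z t) \<le> (\<Prod>t<T. exp (alpha^2 * (G*D)^2 / 2))"
    by (rule prod_mono) (use Zp Zb in \<open>auto intro: less_imp_le\<close>)
  also have "\<dots> = exp (real T * (alpha^2 * (G*D)^2 / 2))" by (simp only: prod_constant card_lessThan exp_of_nat_mult)
  also have "\<dots> = exp 1" by (simp only: Ta)
  finally have "w 0 k * exp (- alpha * L) \<le> exp 1" using m1 by linarith
  hence "ln (w 0 k * exp (- alpha * L)) \<le> ln (exp 1)" using w0k by (subst ln_le_cancel_iff) auto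
  hence lnb: "ln (w 0 k) - alpha * L \<le> 1" using w0k by (simp add: ln_mult)
  have lnw: "- ln (w 0 k) \<le> 2 * ln (real k + 1)"
  proof -
    have kk: "real k * (real k + 1) \<le> (real k + 1)^2" by (simp add: power2_eq_square)
    have kp: "real k \<ge> 1" using kI by simp
    have "1 / (real k + 1)^2 \<le> 1 / (real k * (real k + 1))"
      using kk kp by (intro divide_left_mono) auto
    also have "\<dots> \<le> (1 + 1 / real N) / (real k * (real k + 1))"
      using kp by (intro divide_right_mono) auto
    finally have "1 / (real k + 1)^2 \<le> w 0 k" by (simp add: w0)
    hence "ln (1 / (real k + 1)^2) \<le> ln (w 0 k)" using w0k by (subst ln_le_cancel_iff) auto
    moreover have "ln (1 / (real k + 1)^2) = - (2 * ln (real k + 1))" by (simp add: ln_div ln_realpow)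
    ultimately show ?thesis by linarith
  qed
  have inv: "alpha * (G * D * sqrt (2 * real T) / 2) = 1"
  proof -
    have "alpha * sqrt (2 * real T) = sqrt (2 / (real T * G^2 * D^2) * (2 * real T))"
      by (simp only: alpha_def real_sqrt_mult)
    also have "2 / (real T * G^2 * D^2) * (2 * real T) = (2 / (G * D))^2"
      using GD T by (simp add: field_simps power2_eq_square)
    also have "sqrt ((2 / (G * D))^2) = 2 / (G * D)" using GD by simp
    finally show ?thesis using GD by (simp add: field_simps)
  qed
  have meta: "- L \<le> G * D * sqrt (2 * real T) / 2 * (1 + 2 * ln (real k + 1))"
  proof -
    have "alpha * (- L) \<le> 1 + 2 * ln (real k + 1)" using lnb lnw by linarith
    hence "alpha * (- L) * (G * D * sqrt (2 * real T) / 2) \<le> (1 + 2 * ln (real k + 1)) * (G * D * sqrt (2 * real T) / 2)"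
      using GD by (intro mult_right_mono) auto
    moreover have "alpha * (- L) * (G * D * sqrt (2 * real T) / 2) = - L"
    proof -
      have "alpha * (- L) * (G * D * sqrt (2 * real T) / 2) = (alpha * (G * D * sqrt (2 * real T) / 2)) * (- L)"
        by (simp only: ac_simps)
      thus ?thesis using inv by simp
    qed
    ultimately have "- L \<le> (1 + 2 * ln (real k + 1)) * (G * D * sqrt (2 * real T) / 2)" by linarith
    thus ?thesis by (simp only: ac_simps)
  qed

  define n0 where "n0 = T - 1"
  have Tn: "T = Suc n0" using T by (simp add: n0_def)
  have ogdk: "(\<Sum>t<Suc n0. g t \<bullet> (e t k - u (Suc t))) \<le>
     (D^2 + 2 * D * (\<Sum>t<n0. norm (u (Suc (Suc t)) - u (Suc t))) - (norm (e (Suc n0) k - u (Suc n0)))^2) / (2 * eta k)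
     + eta k * real (Suc n0) * G^2 / 2"
  proof -
    have h: "\<forall>t\<le>n0. e (Suc t) k = closest_point X (e t k - eta k *\<^sub>R g t)" by (simp add: eS)
    have h2: "\<forall>t\<le>Suc n0. e t k \<in> X" using eX kI by blast
    have h3: "\<forall>t\<le>n0. u (Suc t) \<in> X" using u Tn by auto
    have h4: "\<forall>t\<le>n0. norm (g t) \<le> G" using gG Tn by auto
    show ?thesis
      using ogd[OF X(1,2,3) eta_pos, where y = "\<lambda>t. e t k" and v = "\<lambda>t. u (Suc t)" and g = g and n = n0,
          OF h h2 h3 h4 A3(2)] by simp
  qed
  have Pn: "P = (\<Sum>t<n0. norm (u (Suc (Suc t)) - u (Suc t)))"
    unfolding P_def Tn sum_shift2 by simp
  have expert: "(\<Sum>t<T. g t \<bullet> (e t k - u (Suc t))) \<le> (D^2 + 2*D*P) / (2 * eta k) + eta k * real T * G^2 / 2"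
  proof -
    have "(D^2 + 2 * D * P - (norm (e (Suc n0) k - u (Suc n0)))^2) / (2 * eta k) \<le> (D^2 + 2*D*P) / (2 * eta k)"
      using eta_pos by (intro divide_right_mono) auto
    thus ?thesis using ogdk unfolding Pn[symmetric] Tn by linarith
  qed
  have "(\<Sum>t=1..T. f t (ader_play gr X alpha eta N x1 t)) - (\<Sum>t=1..T. f t (u t))
      = (\<Sum>t<T. f (Suc t) (xx t) - f (Suc t) (u (Suc t)))"
    unfolding sum_shift1 play by (simp add: sum_subtractf)
  also have "\<dots> \<le> (\<Sum>t<T. g t \<bullet> (xx t - u (Suc t)))"
  proof (rule sum_mono)
    fix t assume t: "t \<in> {..<T}"
    have tT: "Suc t \<in> {1..T}" using t by simp
    have uX: "u (Suc t) \<in> X" using u tT by blast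
    have "f (Suc t) (xx t) + g t \<bullet> (u (Suc t) - xx t) \<le> f (Suc t) (u (Suc t))"
      unfolding g_def
      by (rule grad_ineq[OF cvx[rule_format, OF tT] X(3) xxX uX grad[rule_format, OF tT xxX]])
    thus "f (Suc t) (xx t) - f (Suc t) (u (Suc t)) \<le> g t \<bullet> (xx t - u (Suc t))"
      by (simp add: inner_diff_right)
  qed
  also have "\<dots> = (\<Sum>t<T. - l t k + g t \<bullet> (e t k - u (Suc t)))"
    by (rule sum.cong) (auto simp: l_def inner_diff_right)
  also have "\<dots> = - L + (\<Sum>t<T. g t \<bullet> (e t k - u (Suc t)))"
    by (simp add: L_def sum.distrib sum_negf sum_subtractf)
  also have "\<dots> \<le> G * D * sqrt (2 * real T) / 2 * (1 + 2 * ln (real k + 1))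
      + 3 * G / 4 * sqrt (2 * real T * (7 * D^2 + 4 * D * P))"
    using meta expert expert_num by linarith
  finally show ?thesis by simp
qed


end
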